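(* Let $F|R$ be an extension of ordered fields with canonical valuation $v$ and assume that $vR$ is not a convex subgroup of $vF$. Then there is no injective map $\tilde\iota:\mathcal C(R)\to\mathcal C(F)$ that is continuous with respect to the full topologies and compatible with restriction.
   Context: The canonical valuation $v$ of an ordered field has as valuation ring the convex hull of $\mathbb Z$. For an ordered field $K$, a cut is a pair $(D,E)$ with $D<E$, $D\cup E=K$; $\mathcal C(K)$ is the set of cuts, ordered by $(D_1,E_1)<(D_2,E_2)$ iff $D_1\subsetneq D_2$. For nonempty $A\subseteq K$, $A^+=(D,K\setminus D)$ with $D$ the smallest initial segment containing $A$, and $A^-=(K\setminus E,E)$ with $E$ the smallest final segment containing $A$. For $a\in K$ and a final segment $S$ of $vK$ (possibly empty), $B_S(a,K)=\{b\in K\mid v(a-b)\in S\cup\{\infty\}\}$ is a ball. Two cuts are equivalent if they are equal or are $B^-$ and $B^+$ for the same ball $B$; a subset of $\mathcal C(K)$ is full if closed under equivalence. The interval topology on $\mathcal C(K)$ has basic open sets $(C_1,C_2)$, $(C_1,(K,\emptyset)]$, $[(\emptyset,K),C_2)$; the full topology consists of all full sets open in the interval topology. Restriction of a cut $(D',E')$ of $F$ to $R$ is $(D'\cap R,E'\cap R)$; $\tilde\iota$ is compatible with restriction if the restriction of $\tilde\iota(C)$ is $C$ for all $C$. *)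

theory Defs
  imports Main
begin

text \<open>Ordered fields: the big field F is the whole type 'a (a linordered_field);
  the subfield R is a subset of it.  Cuts, balls etc. are defined relative to a carrier K.\<close>

definition subfield :: "'a::linordered_field set \<Rightarrow> bool" where
  "subfield R \<longleftrightarrow> 0 \<in> R \<and> 1 \<in> R \<and>
     (\<forall>x\<in>R. \<forall>y\<in>R. x + y \<in> R \<and> x * y \<in> R) \<and>
     (\<forall>x\<in>R. - x \<in> R) \<and> (\<forall>x\<in>R. x \<noteq> 0 \<longrightarrow> inverse x \<in> R)"

text \<open>Valuation ring of the canonical valuation: convex hull of the integers.\<close>
definition vring :: "'a::linordered_field set" where
  "vring = {x. \<exists>m n::int. of_int m \<le> x \<and> x \<le> of_int n}"

text \<open>vle a b means v(a) \<le> v(b), i.e. b \<in> a * vring (with v(0) = \<infinity>).\<close>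
definition vle :: "'a::linordered_field \<Rightarrow> 'a \<Rightarrow> bool" where
  "vle a b \<longleftrightarrow> b = 0 \<or> (a \<noteq> 0 \<and> b / a \<in> vring)"

text \<open>The value v(a), represented as the class of elements with the same value;
  v(0) = {0} plays the role of \<infinity>.\<close>
definition vclass :: "'a::linordered_field \<Rightarrow> 'a set" where
  "vclass a = {b. vle a b \<and> vle b a}"

definition value_set :: "'a::linordered_field set \<Rightarrow> 'a set set" where
  "value_set K = vclass ` (K - {0})"

definition value_convex :: "'a::linordered_field set \<Rightarrow> bool" where
  "value_convex R \<longleftrightarrow> (\<forall>a\<in>R - {0}. \<forall>b\<in>R - {0}. \<forall>c. c \<noteq> 0 \<and> vle a c \<and> vle c b
       \<longrightarrow> vclass c \<in> value_set R)"

definition final_segment :: "'a::linordered_field set \<Rightarrow> 'a set set \<Rightarrow> bool" where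
  "final_segment K S \<longleftrightarrow> S \<subseteq> value_set K \<and>
     (\<forall>x\<in>K - {0}. \<forall>y\<in>K - {0}. vclass x \<in> S \<and> vle x y \<longrightarrow> vclass y \<in> S)"

definition ball :: "'a::linordered_field set \<Rightarrow> 'a set set \<Rightarrow> 'a \<Rightarrow> 'a set" where
  "ball K S a = {b\<in>K. vclass (a - b) \<in> S \<or> a - b = 0}"

definition is_ball :: "'a::linordered_field set \<Rightarrow> 'a set \<Rightarrow> bool" where
  "is_ball K B \<longleftrightarrow> (\<exists>a\<in>K. \<exists>S. final_segment K S \<and> B = ball K S a)"

type_synonym 'a cut = "'a set \<times> 'a set"

definition cuts :: "'a::linordered_field set \<Rightarrow> 'a cut set" where
  "cuts K = {(D, E). D \<union> E = K \<and> (\<forall>d\<in>D. \<forall>e\<in>E. d < e)}"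

definition cut_less :: "'a cut \<Rightarrow> 'a cut \<Rightarrow> bool" where
  "cut_less C1 C2 \<longleftrightarrow> fst C1 \<subset> fst C2"

definition cut_plus :: "'a::linordered_field set \<Rightarrow> 'a set \<Rightarrow> 'a cut" where
  "cut_plus K A = (let D = {x\<in>K. \<exists>a\<in>A. x \<le> a} in (D, K - D))"

definition cut_minus :: "'a::linordered_field set \<Rightarrow> 'a set \<Rightarrow> 'a cut" where
  "cut_minus K A = (let E = {x\<in>K. \<exists>a\<in>A. a \<le> x} in (K - E, E))"

definition cut_equiv :: "'a::linordered_field set \<Rightarrow> 'a cut \<Rightarrow> 'a cut \<Rightarrow> bool" where
  "cut_equiv K C1 C2 \<longleftrightarrow> C1 = C2 \<or>
     (\<exists>B. is_ball K B \<and> ((C1 = cut_minus K B \<and> C2 = cut_plus K B) \<or>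
                          (C1 = cut_plus K B \<and> C2 = cut_minus K B)))"

definition full_set :: "'a::linordered_field set \<Rightarrow> 'a cut set \<Rightarrow> bool" where
  "full_set K U \<longleftrightarrow> U \<subseteq> cuts K \<and>
     (\<forall>C1\<in>U. \<forall>C2\<in>cuts K. cut_equiv K C1 C2 \<longrightarrow> C2 \<in> U)"

definition interval_basic :: "'a::linordered_field set \<Rightarrow> 'a cut set \<Rightarrow> bool" where
  "interval_basic K W \<longleftrightarrow>
     (\<exists>C1\<in>cuts K. \<exists>C2\<in>cuts K. W = {C\<in>cuts K. cut_less C1 C \<and> cut_less C C2}) \<or>
     (\<exists>C1\<in>cuts K. W = {C\<in>cuts K. cut_less C1 C \<and> (cut_less C (K, {}) \<or> C = (K, {}))}) \<or>
     (\<exists>C2\<in>cuts K. W = {C\<in>cuts K. (cut_less ({}, K) C \<or> C = ({}, K)) \<and> cut_less C C2})"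

definition interval_open :: "'a::linordered_field set \<Rightarrow> 'a cut set \<Rightarrow> bool" where
  "interval_open K U \<longleftrightarrow> U \<subseteq> cuts K \<and>
     (\<forall>C\<in>U. \<exists>W. interval_basic K W \<and> C \<in> W \<and> W \<subseteq> U)"

definition full_open :: "'a::linordered_field set \<Rightarrow> 'a cut set \<Rightarrow> bool" where
  "full_open K U \<longleftrightarrow> full_set K U \<and> interval_open K U"

definition full_continuous ::
  "'a::linordered_field set \<Rightarrow> 'a set \<Rightarrow> ('a cut \<Rightarrow> 'a cut) \<Rightarrow> bool" where
  "full_continuous R F f \<longleftrightarrow> (\<forall>C\<in>cuts R. f C \<in> cuts F) \<and>
     (\<forall>U. full_open F U \<longrightarrow> full_open R {C\<in>cuts R. f C \<in> U})"

definition compatible_restriction ::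
  "'a::linordered_field set \<Rightarrow> ('a cut \<Rightarrow> 'a cut) \<Rightarrow> bool" where
  "compatible_restriction R f \<longleftrightarrow> (\<forall>C\<in>cuts R. (fst (f C) \<inter> R, snd (f C) \<inter> R) = C)"

end

theory Submission
  imports Defs
begin


lemma vring_intro: "\<bar>x::'a::linordered_field\<bar> \<le> of_int n \<Longrightarrow> x \<in> vring"
proof -
  assume "\<bar>x\<bar> \<le> of_int n"
  then have "of_int (-n) \<le> x" "x \<le> of_int n" by (auto simp: abs_le_iff)
  then show ?thesis unfolding vring_def by blast
qed

lemma vring_elim: "(x::'a::linordered_field) \<in> vring \<Longrightarrow> \<exists>n::int. \<bar>x\<bar> \<le> of_int n"
proof -
  assume "x \<in> vring"
  then obtain m n :: int where h: "of_int m \<le> x" "x \<le> of_int n" unfolding vring_def by blast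
  have "x \<le> of_int (\<bar>m\<bar> + \<bar>n\<bar>)"
    using h(2) by (metis abs_ge_self add.commute add_increasing2 abs_ge_zero of_int_le_iff order_trans)
  moreover have "- x \<le> of_int (\<bar>m\<bar> + \<bar>n\<bar>)"
  proof -
    have "-x \<le> of_int (-m)" using h(1) by simp
    also have "\<dots> \<le> of_int (\<bar>m\<bar> + \<bar>n\<bar>)" by simp
    finally show ?thesis .
  qed
  ultimately show ?thesis by (intro exI[of _ "\<bar>m\<bar> + \<bar>n\<bar>"]) (simp add: abs_le_iff)
qed

lemma vring_mult: "x \<in> vring \<Longrightarrow> y \<in> vring \<Longrightarrow> (x::'a::linordered_field) * y \<in> vring"
proof -
  assume "x \<in> vring" "y \<in> vring"
  then obtain m n :: int where h: "\<bar>x\<bar> \<le> of_int m" "\<bar>y\<bar> \<le> of_int n" using vring_elim by blast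
  have "0 \<le> (of_int m::'a)" using h(1) abs_ge_zero order_trans by blast
  have "\<bar>x * y\<bar> \<le> of_int m * of_int n"
    unfolding abs_mult by (rule mult_mono[OF h]) (use \<open>0 \<le> (of_int m::'a)\<close> in auto)
  then show ?thesis by (intro vring_intro[of _ "m*n"]) simp
qed

lemma vring_add: "x \<in> vring \<Longrightarrow> y \<in> vring \<Longrightarrow> (x::'a::linordered_field) + y \<in> vring"
proof -
  assume "x \<in> vring" "y \<in> vring"
  then obtain m n :: int where h: "\<bar>x\<bar> \<le> of_int m" "\<bar>y\<bar> \<le> of_int n" using vring_elim by blast
  have "\<bar>x + y\<bar> \<le> of_int m + of_int n" using abs_triangle_ineq[of x y] h by linarith
  then show ?thesis by (intro vring_intro[of _ "m+n"]) simp
qed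

lemma vring_le1: "\<bar>x::'a::linordered_field\<bar> \<le> 1 \<Longrightarrow> x \<in> vring"
  by (rule vring_intro[of _ 1]) simp

lemma vring_0: "(0::'a::linordered_field) \<in> vring" by (rule vring_le1) simp
lemma vring_1: "(1::'a::linordered_field) \<in> vring" by (rule vring_le1) simp
lemma vring_2: "(2::'a::linordered_field) \<in> vring" by (rule vring_intro[of _ 2]) simp

lemma vle_refl: "vle a a" unfolding vle_def using vring_1 by auto
lemma vle_0_iff: "vle 0 b \<longleftrightarrow> b = 0" unfolding vle_def by auto
lemma vle_0: "vle a 0" unfolding vle_def by auto

lemma vle_trans: "vle a b \<Longrightarrow> vle b c \<Longrightarrow> vle a (c::'a::linordered_field)"
proof -
  assume ab: "vle a b" and bc: "vle b c"
  show ?thesis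
  proof (cases "c = 0")
    case True then show ?thesis by (simp add: vle_0)
  next
    case False
    then have "b \<noteq> 0" using bc vle_0_iff by auto
    then have "a \<noteq> 0" "b / a \<in> vring" using ab unfolding vle_def by auto
    moreover have "c / b \<in> vring" using bc \<open>b \<noteq> 0\<close> False unfolding vle_def by auto
    ultimately have "(c / b) * (b / a) \<in> vring" using vring_mult by blast
    moreover have "(c / b) * (b / a) = c / a" using \<open>b \<noteq> 0\<close> by simp
    ultimately show ?thesis unfolding vle_def using \<open>a \<noteq> 0\<close> by (auto simp: vring_0)
  qed
qed

lemma vle_abs_le: "\<bar>h\<bar> \<le> \<bar>s::'a::linordered_field\<bar> \<Longrightarrow> vle s h"
proof (cases "s = 0")
  case True
  then show "\<bar>h\<bar> \<le> \<bar>s\<bar> \<Longrightarrow> vle s h" by (simp add: vle_def)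
next
  case False
  assume "\<bar>h\<bar> \<le> \<bar>s\<bar>"
  then have "\<bar>h / s\<bar> \<le> 1" using False by (simp add: abs_divide divide_le_eq_1)
  then have "h / s \<in> vring" by (rule vring_le1)
  then show ?thesis unfolding vle_def using False by auto
qed

lemma vle_total: "vle a b \<or> vle b (a::'a::linordered_field)"
  using vle_abs_le[of a b] vle_abs_le[of b a] by linarith

lemma vle_half: "vle (x / 2) (x::'a::linordered_field)"
proof (cases "x = 0")
  case False
  then have "x / (x/2) = 2" by simp
  then show ?thesis unfolding vle_def using False vring_2 by auto
qed (simp add: vle_0)

lemma vle_double: "vle x (2 * (x::'a::linordered_field))"
proof (cases "x = 0")
  case False
  then have "(2*x) / x = 2" by simp
  then show ?thesis unfolding vle_def using False vring_2 by auto
qed (simp add: vle_0)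

lemma vle_ultra: "vle s t \<Longrightarrow> vle s (s + (t::'a::linordered_field))"
proof (cases "s = 0")
  case True
  then show "vle s t \<Longrightarrow> vle s (s + t)" by (simp add: vle_0_iff vle_0)
next
  case False
  assume "vle s t"
  then have "t / s \<in> vring \<or> t = 0" unfolding vle_def by auto
  then have "t / s \<in> vring" by (auto simp: vring_0)
  then have "1 + t / s \<in> vring" using vring_1 vring_add by blast
  moreover have "1 + t / s = (s + t) / s" using False by (simp add: field_simps)
  ultimately show ?thesis unfolding vle_def using False by auto
qed

lemma vclass_eq: "vle c r \<Longrightarrow> vle r c \<Longrightarrow> vclass c = vclass r"
  unfolding vclass_def using vle_trans by blast



definition vup :: "'a::linordered_field set \<Rightarrow> bool" where
  "vup S \<longleftrightarrow> 0 \<in> S \<and> (\<forall>s\<in>S. \<forall>h. vle s h \<longrightarrow> h \<in> S)"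

lemma vupD: "vup S \<Longrightarrow> s \<in> S \<Longrightarrow> vle s h \<Longrightarrow> h \<in> S"
  unfolding vup_def by blast
lemma vup0: "vup S \<Longrightarrow> 0 \<in> S" unfolding vup_def by blast

lemma vup_convex: "vup S \<Longrightarrow> s \<in> S \<Longrightarrow> \<bar>h\<bar> \<le> \<bar>s\<bar> \<Longrightarrow> h \<in> S"
  using vupD vle_abs_le by blast

lemma vup_neg: "vup S \<Longrightarrow> s \<in> S \<Longrightarrow> - s \<in> S"
  using vup_convex by fastforce

lemma vup_abs: "vup S \<Longrightarrow> s \<in> S \<Longrightarrow> \<bar>s\<bar> \<in> S"
  using vup_convex by fastforce

lemma vup_add: "vup S \<Longrightarrow> s \<in> S \<Longrightarrow> t \<in> S \<Longrightarrow> s + t \<in> S"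
proof -
  assume a: "vup S" "s \<in> S" "t \<in> S"
  show ?thesis
  proof (cases "vle s t")
    case True
    then show ?thesis using vle_ultra a vupD by blast
  next
    case False
    then have "vle t s" using vle_total by blast
    then have "vle t (t + s)" by (rule vle_ultra)
    then show ?thesis using a vupD by (metis add.commute)
  qed
qed

lemma vup_diff: "vup S \<Longrightarrow> s \<in> S \<Longrightarrow> t \<in> S \<Longrightarrow> s - t \<in> S"
  using vup_add[of S s "-t"] vup_neg by fastforce

lemma vup_lt: "vup S \<Longrightarrow> s \<in> S \<Longrightarrow> w \<notin> S \<Longrightarrow> \<bar>s\<bar> < \<bar>w\<bar>"
  using vup_convex[of S s w] by fastforce

lemma vup_half: "vup S \<Longrightarrow> w \<notin> S \<Longrightarrow> w / 2 \<notin> S"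
  using vupD vle_half by blast

lemma vup_linear: "vup S \<Longrightarrow> vup T \<Longrightarrow> S \<subseteq> T \<or> T \<subseteq> S"
  using vupD vle_total by blast

lemma fst_cut_plus: "fst (cut_plus K A) = {x\<in>K. \<exists>a\<in>A. x \<le> a}"
  by (simp add: cut_plus_def Let_def)
lemma fst_cut_minus: "fst (cut_minus K A) = K - {x\<in>K. \<exists>a\<in>A. a \<le> x}"
  by (simp add: cut_minus_def Let_def)

lemma cut_plus_cuts: "cut_plus K A \<in> cuts K"
  unfolding cut_plus_def cuts_def Let_def by (auto simp: not_le intro: order.strict_trans1)

lemma cut_minus_cuts: "cut_minus K A \<in> cuts K"
  unfolding cut_minus_def cuts_def Let_def by (auto simp: not_le) (meson order_trans not_le)

lemma cuts_snd: "C \<in> cuts K \<Longrightarrow> snd C = K - fst C"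
  unfolding cuts_def by force

lemma cuts_fst_sub: "C \<in> cuts K \<Longrightarrow> fst C \<subseteq> K"
  unfolding cuts_def by force

lemma cuts_down: "C \<in> cuts K \<Longrightarrow> x \<in> fst C \<Longrightarrow> y \<in> K \<Longrightarrow> y \<le> x \<Longrightarrow> y \<in> fst C"
  unfolding cuts_def by force

lemma cuts_lt: "C \<in> cuts K \<Longrightarrow> x \<in> fst C \<Longrightarrow> y \<in> K \<Longrightarrow> y \<notin> fst C \<Longrightarrow> x < y"
  unfolding cuts_def by force

lemma cut_witness: "C1 \<in> cuts K \<Longrightarrow> C2 \<in> cuts K \<Longrightarrow> z \<in> fst C2 \<Longrightarrow> z \<notin> fst C1 \<Longrightarrow> cut_less C1 C2"
proof -
  assume a: "C1 \<in> cuts K" "C2 \<in> cuts K" "z \<in> fst C2" "z \<notin> fst C1"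
  have zK: "z \<in> K" using a cuts_fst_sub by blast
  have "fst C1 \<subseteq> fst C2"
  proof
    fix w assume w: "w \<in> fst C1"
    then have "w < z" using cuts_lt[OF a(1) w zK a(4)] by simp
    then show "w \<in> fst C2" using cuts_down[OF a(2) a(3)] w cuts_fst_sub[OF a(1)] by auto
  qed
  then show ?thesis unfolding cut_less_def using a by blast
qed

lemma cuts_linear: "C1 \<in> cuts K \<Longrightarrow> C2 \<in> cuts K \<Longrightarrow> fst C1 \<subseteq> fst C2 \<or> fst C2 \<subseteq> fst C1"
  using cut_witness unfolding cut_less_def by blast

lemma cuts_eq: "C1 \<in> cuts K \<Longrightarrow> C2 \<in> cuts K \<Longrightarrow> fst C1 = fst C2 \<Longrightarrow> C1 = C2"
  using cuts_snd by (metis prod.collapse)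

lemma not_cut_less: "C1 \<in> cuts K \<Longrightarrow> C2 \<in> cuts K \<Longrightarrow> \<not> cut_less C1 C2 \<Longrightarrow> fst C2 \<subseteq> fst C1"
  using cuts_linear unfolding cut_less_def by blast

lemma bot_le: "C \<in> cuts K \<Longrightarrow> cut_less ({}, K) C \<or> C = ({}, K)"
  unfolding cut_less_def using cuts_snd by (metis fst_conv prod.collapse Diff_empty psubsetI empty_subsetI)

lemma top_ge: "C \<in> cuts K \<Longrightarrow> cut_less C (K, {}) \<or> C = (K, {})"
  unfolding cut_less_def using cuts_snd cuts_fst_sub
  by (metis Diff_cancel fst_conv prod.collapse psubsetI)

lemma cut_less_trans: "cut_less A B \<Longrightarrow> cut_less B C \<Longrightarrow> cut_less A C"
  unfolding cut_less_def by blast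
lemma cut_less_irrefl: "\<not> cut_less A A"
  unfolding cut_less_def by blast
lemma cut_less_asym: "cut_less A B \<Longrightarrow> \<not> cut_less B A"
  unfolding cut_less_def by blast



abbreviation mm :: "'a::linordered_field set \<Rightarrow> 'a cut" where "mm A \<equiv> cut_minus UNIV A"
abbreviation pp :: "'a::linordered_field set \<Rightarrow> 'a cut" where "pp A \<equiv> cut_plus UNIV A"

lemma mem_pp: "x \<in> fst (pp A) \<longleftrightarrow> (\<exists>a\<in>A. x \<le> a)"
  by (simp add: fst_cut_plus)
lemma mem_mm: "x \<in> fst (mm A) \<longleftrightarrow> (\<forall>a\<in>A. \<not> a \<le> x)"
  by (simp add: fst_cut_minus)

lemma wit: "C1 \<in> cuts UNIV \<Longrightarrow> C2 \<in> cuts UNIV \<Longrightarrow> z \<in> fst C2 \<Longrightarrow> z \<notin> fst C1 \<Longrightarrow> cut_less C1 C2"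
  by (rule cut_witness)

lemmas mmc = cut_minus_cuts[of UNIV] and ppc = cut_plus_cuts[of UNIV]

definition ins :: "'a::linordered_field set \<Rightarrow> 'a cut \<Rightarrow> bool" where
  "ins Y C \<longleftrightarrow> cut_less (mm Y) C \<and> cut_less C (pp Y)"
definition outs :: "'a::linordered_field set \<Rightarrow> 'a cut \<Rightarrow> bool" where
  "outs Y C \<longleftrightarrow> cut_less C (mm Y) \<or> cut_less (pp Y) C"

lemma pos_recenter:
  assumes "vup G" "z \<in> {b. x0 - b \<in> G}"
  shows "{b. x0 - b \<in> G} = {b. z - b \<in> G}"
proof -
  have "x0 - z \<in> G" using assms by simp
  have "x0 - b \<in> G \<longleftrightarrow> z - b \<in> G" for b
  proof
    assume "x0 - b \<in> G"
    then have "(x0 - b) - (x0 - z) \<in> G" using vup_diff assms(1) \<open>x0 - z \<in> G\<close> by blast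
    then show "z - b \<in> G" by simp
  next
    assume "z - b \<in> G"
    then have "(z - b) + (x0 - z) \<in> G" using vup_add assms(1) \<open>x0 - z \<in> G\<close> by blast
    then show "x0 - b \<in> G" by simp
  qed
  then show ?thesis by blast
qed

lemma pos_center:
  fixes G Y :: "'a::linordered_field set"
  assumes G: "vup G" and Y: "vup Y" and z: "z \<in> Y"
  defines "X \<equiv> {b. z - b \<in> G}"
  shows "(mm X = mm Y \<and> pp X = pp Y) \<or> (ins Y (mm X) \<and> ins Y (pp X)) \<or> (outs Y (mm X) \<and> outs Y (pp X))"
proof -
  have zX: "z \<in> X" unfolding X_def using vup0[OF G] by simp
  consider "G = Y" | "G \<subset> Y" | "Y \<subset> G" using vup_linear[OF G Y] by blast
  then show ?thesis
  proof cases
    case 1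
    have "X = Y"
    proof (intro set_eqI iffI)
      fix b assume "b \<in> X" then have "z - b \<in> Y" using 1 X_def by simp
      then have "z - (z - b) \<in> Y" using vup_diff[OF Y z] by blast
      then show "b \<in> Y" by simp
    next
      fix b assume "b \<in> Y" then have "z - b \<in> Y" using vup_diff[OF Y z] by blast
      then show "b \<in> X" using 1 X_def by simp
    qed
    then show ?thesis by simp
  next
    case 2
    then obtain w where w: "w \<in> Y" "w \<notin> G" by blast
    define p where "p = z + \<bar>w\<bar>"
    define q where "q = z - \<bar>w\<bar>"
    have pY: "p \<in> Y" unfolding p_def using vup_add[OF Y z vup_abs[OF Y w(1)]] .
    have qY: "q \<in> Y" unfolding q_def using vup_diff[OF Y z vup_abs[OF Y w(1)]] .
    have bnd: "q < b \<and> b < p" if "b \<in> X" for b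
    proof -
      have "z - b \<in> G" using that X_def by simp
      then have "\<bar>z - b\<bar> < \<bar>w\<bar>" using vup_lt[OF G] w(2) by blast
      then show ?thesis unfolding p_def q_def by linarith
    qed
    have "q \<in> fst (mm X)" using bnd by (force simp: mem_mm not_le)
    moreover have "q \<notin> fst (mm Y)" using qY by (auto simp: mem_mm)
    ultimately have 1: "cut_less (mm Y) (mm X)" by (rule wit[OF mmc mmc])
    have "z \<in> fst (pp Y)" using z by (auto simp: mem_pp)
    moreover have "z \<notin> fst (mm X)" using zX by (auto simp: mem_mm)
    ultimately have 2: "cut_less (mm X) (pp Y)" by (rule wit[OF mmc ppc])
    have "z \<in> fst (pp X)" using zX by (auto simp: mem_pp)
    moreover have "z \<notin> fst (mm Y)" using z by (auto simp: mem_mm)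
    ultimately have 3: "cut_less (mm Y) (pp X)" by (rule wit[OF mmc ppc])
    have "p \<in> fst (pp Y)" using pY by (auto simp: mem_pp)
    moreover have "p \<notin> fst (pp X)" using bnd by (force simp: mem_pp)
    ultimately have 4: "cut_less (pp X) (pp Y)" by (rule wit[OF ppc ppc])
    show ?thesis using 1 2 3 4 unfolding ins_def by blast
  next
    case 3
    then obtain w where w: "w \<in> G" "w \<notin> Y" by blast
    define p where "p = z + \<bar>w\<bar>"
    define q where "q = z - \<bar>w\<bar>"
    have pX: "p \<in> X" unfolding X_def p_def using vup_neg[OF G vup_abs[OF G w(1)]] by simp
    have qX: "q \<in> X" unfolding X_def q_def using vup_abs[OF G w(1)] by simp
    have bnd: "q < y \<and> y < p" if "y \<in> Y" for y
    proof -
      have "y - z \<in> Y" using that vup_diff[OF Y] z by blast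
      then have "\<bar>y - z\<bar> < \<bar>w\<bar>" using vup_lt[OF Y] w(2) by blast
      then show ?thesis unfolding p_def q_def by linarith
    qed
    have "q \<in> fst (mm Y)" using bnd by (force simp: mem_mm not_le)
    moreover have "q \<notin> fst (mm X)" using qX by (auto simp: mem_mm)
    ultimately have 1: "cut_less (mm X) (mm Y)" by (rule wit[OF mmc mmc])
    have "p \<in> fst (pp X)" using pX by (auto simp: mem_pp)
    moreover have "p \<notin> fst (pp Y)" using bnd by (force simp: mem_pp)
    ultimately have 2: "cut_less (pp Y) (pp X)" by (rule wit[OF ppc ppc])
    show ?thesis using 1 2 unfolding outs_def by blast
  qed
qed

lemma pos_disjoint:
  fixes G Y :: "'a::linordered_field set"
  assumes G: "vup G" and Y: "vup Y" and X: "X = {b. x0 - b \<in> G}" and disj: "X \<inter> Y = {}"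
  shows "outs Y (mm X) \<and> outs Y (pp X)"
proof -
  have x0X: "x0 \<in> X" unfolding X using vup0[OF G] by simp
  then have x0Y: "x0 \<notin> Y" using disj by blast
  have "0 \<notin> X" using disj vup0[OF Y] by blast
  then have x0G: "x0 \<notin> G" unfolding X by simp
  define z where "z = x0 / 2"
  have zY: "z \<notin> Y" unfolding z_def using vup_half[OF Y x0Y] .
  have zG: "z \<notin> G" unfolding z_def using vup_half[OF G x0G] .
  have x0nz: "x0 \<noteq> 0" using x0Y vup0[OF Y] by blast
  have bX: "\<bar>x0 - b\<bar> < \<bar>z\<bar>" if "b \<in> X" for b
    using vup_lt[OF G _ zG] that X by blast
  have bY: "\<bar>y\<bar> < \<bar>z\<bar>" if "y \<in> Y" for y
    using vup_lt[OF Y that zY] .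
  show ?thesis
  proof (cases "x0 > 0")
    case True
    then have az: "\<bar>z\<bar> = z" "z = x0 / 2" unfolding z_def by auto
    have Xz: "z < b" if "b \<in> X" for b using bX[OF that] az by linarith
    have Yz: "y < z" if "y \<in> Y" for y using bY[OF that] az by linarith
    have "z \<in> fst (mm X)" using Xz by (force simp: mem_mm)
    moreover have "z \<notin> fst (pp Y)" using Yz by (force simp: mem_pp)
    ultimately have 1: "cut_less (pp Y) (mm X)" by (rule wit[OF ppc mmc])
    have "z \<le> x0" using az True by simp
    then have "z \<in> fst (pp X)" using x0X by (force simp: mem_pp)
    moreover have "z \<notin> fst (pp Y)" using Yz by (force simp: mem_pp)
    ultimately have 2: "cut_less (pp Y) (pp X)" by (rule wit[OF ppc ppc])
    show ?thesis using 1 2 unfolding outs_def by blast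
  next
    case False
    then have neg: "x0 < 0" using x0nz by linarith
    then have az: "\<bar>z\<bar> = - z" "z = x0 / 2" unfolding z_def by auto
    have Xz: "b < z" if "b \<in> X" for b using bX[OF that] az by linarith
    have Yz: "z < y" if "y \<in> Y" for y using bY[OF that] az by linarith
    have "z \<in> fst (mm Y)" using Yz by (force simp: mem_mm)
    moreover have "z \<notin> fst (mm X)" using x0X az neg by (force simp: mem_mm)
    ultimately have 1: "cut_less (mm X) (mm Y)" by (rule wit[OF mmc mmc])
    have "z \<in> fst (mm Y)" using Yz by (force simp: mem_mm)
    moreover have "z \<notin> fst (pp X)" using Xz by (force simp: mem_pp)
    ultimately have 2: "cut_less (pp X) (mm Y)" by (rule wit[OF ppc mmc])
    show ?thesis using 1 2 unfolding outs_def by blast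
  qed
qed

lemma ball_vup:
  assumes "final_segment UNIV T"
  shows "vup {g::'a::linordered_field. vclass g \<in> T \<or> g = 0}"
  unfolding vup_def
proof (intro conjI ballI allI impI)
  fix s h :: 'a
  assume s: "s \<in> {g. vclass g \<in> T \<or> g = 0}" and sh: "vle s h"
  show "h \<in> {g. vclass g \<in> T \<or> g = 0}"
  proof (cases "h = 0")
    case False
    then have "s \<noteq> 0" using sh vle_0_iff by auto
    then have "vclass s \<in> T" using s by auto
    then have "vclass h \<in> T" using assms False \<open>s \<noteq> 0\<close> sh unfolding final_segment_def by blast
    then show ?thesis by simp
  qed simp
qed simp

lemma pos_ball:
  fixes Y :: "'a::linordered_field set"
  assumes Y: "vup Y" and X: "is_ball UNIV X"
  shows "(mm X = mm Y \<and> pp X = pp Y) \<or> (ins Y (mm X) \<and> ins Y (pp X)) \<or> (outs Y (mm X) \<and> outs Y (pp X))"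
proof -
  obtain x0 T where T: "final_segment UNIV T" and XB: "X = ball UNIV T x0"
    using X unfolding is_ball_def by blast
  define G where "G = {g::'a. vclass g \<in> T \<or> g = 0}"
  have G: "vup G" unfolding G_def using ball_vup[OF T] .
  have XG: "X = {b. x0 - b \<in> G}" unfolding XB G_def ball_def by auto
  show ?thesis
  proof (cases "X \<inter> Y = {}")
    case True
    then show ?thesis using pos_disjoint[OF G Y XG] by blast
  next
    case False
    then obtain z where z: "z \<in> X" "z \<in> Y" by blast
    have "X = {b. z - b \<in> G}" using pos_recenter[OF G] z(1) XG by simp
    then show ?thesis using pos_center[OF G Y z(2)] by simp
  qed
qed



definition V1 :: "'a::linordered_field set \<Rightarrow> 'a cut set" where
  "V1 Y = {C\<in>cuts UNIV. ins Y C}"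
definition V2 :: "'a::linordered_field set \<Rightarrow> 'a cut set" where
  "V2 Y = {C\<in>cuts UNIV. outs Y C}"

lemma mm_le_pp: assumes "vup Y" shows "fst (mm Y) \<subseteq> fst (pp Y)"
proof
  fix x assume "x \<in> fst (mm Y)"
  then have "x < 0" using vup0[OF assms] by (auto simp: mem_mm not_le)
  then show "x \<in> fst (pp Y)" using vup0[OF assms] by (auto simp: mem_pp intro!: bexI[of _ 0])
qed

lemma ins_outs: "ins Y C \<Longrightarrow> outs Y C \<Longrightarrow> False"
  unfolding ins_def outs_def cut_less_def by blast

lemma equiv_cases:
  assumes "cut_equiv UNIV C1 C2"
  shows "C1 = C2 \<or> (\<exists>X. is_ball UNIV X \<and> ((C1 = mm X \<and> C2 = pp X) \<or> (C1 = pp X \<and> C2 = mm X)))"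
  using assms unfolding cut_equiv_def by blast

lemma full_V1:
  assumes Y: "vup (Y::'a::linordered_field set)"
  shows "full_open UNIV (V1 Y)"
  unfolding full_open_def
proof
  show "full_set UNIV (V1 Y)"
    unfolding full_set_def
  proof (intro conjI ballI impI)
    show "V1 Y \<subseteq> cuts UNIV" unfolding V1_def by blast
  next
    fix C1 C2 assume C1: "C1 \<in> V1 Y" and C2: "C2 \<in> cuts UNIV" and eq: "cut_equiv UNIV C1 C2"
    have i1: "ins Y C1" using C1 unfolding V1_def by blast
    have "ins Y C2"
    proof (cases "C1 = C2")
      case True then show ?thesis using i1 by simp
    next
      case False
      then obtain X where X: "is_ball UNIV X" and sw: "(C1 = mm X \<and> C2 = pp X) \<or> (C1 = pp X \<and> C2 = mm X)"
        using equiv_cases[OF eq] by blast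
      have irr: "\<not> ins Y (mm Y)" "\<not> ins Y (pp Y)" unfolding ins_def using cut_less_irrefl by blast+
      from pos_ball[OF Y X] show ?thesis using sw i1 irr ins_outs by metis
    qed
    then show "C2 \<in> V1 Y" using C2 unfolding V1_def by blast
  qed
next
  show "interval_open UNIV (V1 Y)"
    unfolding interval_open_def
  proof (intro conjI ballI)
    show "V1 Y \<subseteq> cuts UNIV" unfolding V1_def by blast
  next
    fix C assume "C \<in> V1 Y"
    moreover have "interval_basic UNIV (V1 Y)"
      unfolding interval_basic_def V1_def ins_def using mmc ppc by blast
    ultimately show "\<exists>W. interval_basic UNIV W \<and> C \<in> W \<and> W \<subseteq> V1 Y" by blast
  qed
qed

lemma full_V2:
  assumes Y: "vup (Y::'a::linordered_field set)"
  shows "full_open UNIV (V2 Y)"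
  unfolding full_open_def
proof
  have no1: "\<not> outs Y (mm Y)" "\<not> outs Y (pp Y)"
    unfolding outs_def cut_less_def using mm_le_pp[OF Y] by blast+
  show "full_set UNIV (V2 Y)"
    unfolding full_set_def
  proof (intro conjI ballI impI)
    show "V2 Y \<subseteq> cuts UNIV" unfolding V2_def by blast
  next
    fix C1 C2 assume C1: "C1 \<in> V2 Y" and C2: "C2 \<in> cuts UNIV" and eq: "cut_equiv UNIV C1 C2"
    have i1: "outs Y C1" using C1 unfolding V2_def by blast
    have "outs Y C2"
    proof (cases "C1 = C2")
      case True then show ?thesis using i1 by simp
    next
      case False
      then obtain X where X: "is_ball UNIV X" and sw: "(C1 = mm X \<and> C2 = pp X) \<or> (C1 = pp X \<and> C2 = mm X)"
        using equiv_cases[OF eq] by blast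
      from pos_ball[OF Y X] show ?thesis using sw i1 no1 ins_outs by metis
    qed
    then show "C2 \<in> V2 Y" using C2 unfolding V2_def by blast
  qed
next
  show "interval_open UNIV (V2 Y)"
    unfolding interval_open_def
  proof (intro conjI ballI)
    show "V2 Y \<subseteq> cuts UNIV" unfolding V2_def by blast
  next
    fix C assume C: "C \<in> V2 Y"
    then have Cc: "C \<in> cuts UNIV" and o: "cut_less C (mm Y) \<or> cut_less (pp Y) C"
      unfolding V2_def outs_def by blast+
    from o show "\<exists>W. interval_basic UNIV W \<and> C \<in> W \<and> W \<subseteq> V2 Y"
    proof
      assume l: "cut_less C (mm Y)"
      let ?W = "{C\<in>cuts UNIV. (cut_less ({}, UNIV) C \<or> C = ({}, UNIV)) \<and> cut_less C (mm Y)}"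
      have "interval_basic UNIV ?W" unfolding interval_basic_def using mmc by blast
      moreover have "C \<in> ?W" using Cc l bot_le by blast
      moreover have "?W \<subseteq> V2 Y" unfolding V2_def outs_def by blast
      ultimately show ?thesis by blast
    next
      assume l: "cut_less (pp Y) C"
      let ?W = "{C\<in>cuts UNIV. cut_less (pp Y) C \<and> (cut_less C (UNIV, {}) \<or> C = (UNIV, {}))}"
      have "interval_basic UNIV ?W" unfolding interval_basic_def using ppc by blast
      moreover have "C \<in> ?W" using Cc l top_ge by blast
      moreover have "?W \<subseteq> V2 Y" unfolding V2_def outs_def by blast
      ultimately show ?thesis by blast
    qed
  qed
qed



lemma sf: assumes "subfield R"
  shows "0 \<in> R" "1 \<in> R" "\<And>x y. x \<in> R \<Longrightarrow> y \<in> R \<Longrightarrow> x + y \<in> R"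
    "\<And>x y. x \<in> R \<Longrightarrow> y \<in> R \<Longrightarrow> x * y \<in> R" "\<And>x. x \<in> R \<Longrightarrow> - x \<in> R"
    "\<And>x. x \<in> R \<Longrightarrow> x \<noteq> 0 \<Longrightarrow> inverse x \<in> R"
  using assms unfolding subfield_def by blast+

lemma sf_two: assumes "subfield R" shows "(2::'a::linordered_field) \<in> R"
proof -
  have "(1::'a) + 1 \<in> R" using sf(2)[OF assms] sf(3)[OF assms] by blast
  then show ?thesis by (simp only: one_add_one)
qed

lemma sf2: assumes "subfield R"
  shows "\<And>x. x \<in> R \<Longrightarrow> 2 * x \<in> R" "\<And>x. x \<in> R \<Longrightarrow> x / 2 \<in> R" "\<And>x. x \<in> R \<Longrightarrow> \<bar>x\<bar> \<in> R"
proof -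
  fix x :: 'a assume x: "x \<in> R"
  show "2 * x \<in> R" by (rule sf(4)[OF assms sf_two[OF assms] x])
next
  fix x :: 'a assume x: "x \<in> R"
  have "(2::'a) \<noteq> 0" by simp
  then have "inverse (2::'a) \<in> R" by (rule sf(6)[OF assms sf_two[OF assms]])
  then have "x * inverse 2 \<in> R" by (rule sf(4)[OF assms x])
  then show "x / 2 \<in> R" by (simp only: divide_inverse)
next
  fix x :: 'a assume x: "x \<in> R"
  show "\<bar>x\<bar> \<in> R"
  proof (cases "x < 0")
    case True
    then have "\<bar>x\<bar> = - x" by simp
    then show ?thesis using sf(5)[OF assms x] by simp
  next
    case False
    then have "\<bar>x\<bar> = x" by simp
    then show ?thesis using x by simp
  qed
qed

theorem proposition4p9:
  fixes R :: "'a::linordered_field set"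
  assumes "subfield R"
    and "\<not> value_convex R"
  shows "\<not> (\<exists>f. (\<forall>C\<in>cuts R. f C \<in> cuts (UNIV :: 'a set)) \<and> inj_on f (cuts R) \<and>
              full_continuous R (UNIV :: 'a set) f \<and> compatible_restriction R f)"
proof
  assume "\<exists>f. (\<forall>C\<in>cuts R. f C \<in> cuts (UNIV :: 'a set)) \<and> inj_on f (cuts R) \<and>
              full_continuous R (UNIV :: 'a set) f \<and> compatible_restriction R f"
  then obtain f where H: "(\<forall>C\<in>cuts R. f C \<in> cuts (UNIV :: 'a set)) \<and> inj_on f (cuts R) \<and>
              full_continuous R (UNIV :: 'a set) f \<and> compatible_restriction R f" by (elim exE)
  note fc0 = H[THEN conjunct1]
  have fc: "\<And>C. C \<in> cuts R \<Longrightarrow> f C \<in> cuts (UNIV :: 'a set)" using fc0 by (rule bspec)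
  note cont = H[THEN conjunct2, THEN conjunct2, THEN conjunct1]
  note comp = H[THEN conjunct2, THEN conjunct2, THEN conjunct2]
  have R: "subfield R" by fact
  note sf = sf[OF R] sf2[OF R]
  obtain a b c where a: "a \<in> R" "a \<noteq> 0" and b: "b \<in> R" "b \<noteq> 0" and c: "c \<noteq> 0"
    and ac: "vle a c" and cb: "vle c b" and cv: "vclass c \<notin> value_set R"
    using assms(2) unfolding value_convex_def by blast
  have noeq: False if "r \<in> R" "r \<noteq> 0" "vle c r" "vle r c" for r
  proof -
    have "vclass c = vclass r" using vclass_eq that by blast
    then have "vclass c \<in> value_set R" unfolding value_set_def using that by blast
    then show False using cv by blast
  qed
  have compm: "x \<in> fst (f C) \<longleftrightarrow> x \<in> fst C" if "C \<in> cuts R" "x \<in> R" for C x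
  proof -
    have e: "(fst (f C) \<inter> R, snd (f C) \<inter> R) = C" using comp that(1) unfolding compatible_restriction_def by blast
    have "fst (f C) \<inter> R = fst C" using arg_cong[OF e, of fst] by simp
    then show ?thesis using that(2) by blast
  qed
  have pre_open: "\<exists>W. interval_basic R W \<and> C \<in> W \<and> W \<subseteq> {C\<in>cuts R. f C \<in> U}"
    if "full_open UNIV U" "C \<in> cuts R" "f C \<in> U" for U C
  proof -
    have "interval_open R {C\<in>cuts R. f C \<in> U}" using cont that(1)
      unfolding full_continuous_def full_open_def by blast
    then show ?thesis using that unfolding interval_open_def by blast
  qed
  define Y where "Y = {y::'a. vle c y}"
  define Y2 where "Y2 = {y::'a. vle c y \<and> \<not> vle y c}"
  have vY: "vup Y" unfolding vup_def Y_def using vle_0 vle_trans by blast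
  have vY2: "vup Y2" unfolding vup_def Y2_def
  proof (intro conjI ballI allI impI)
    show "0 \<in> {y. vle c y \<and> \<not> vle y c}" using vle_0[of c] vle_0_iff[of c] c by simp
  next
    fix s h assume s: "s \<in> {y. vle c y \<and> \<not> vle y c}" and h: "vle s h"
    have "vle c h" using s h vle_trans by blast
    moreover have "\<not> vle h c" using s h vle_trans[of s h c] by blast
    ultimately show "h \<in> {y. vle c y \<and> \<not> vle y c}" by simp
  qed
  define B where "B = {r\<in>R. vle c r}"
  define Bp where "Bp = cut_plus R B"
  have Bpc: "Bp \<in> cuts R" unfolding Bp_def by (rule cut_plus_cuts)
  have BY: "B \<subseteq> Y" unfolding B_def Y_def by blast
  have B0: "0 \<in> B" unfolding B_def using sf(1) vle_0 by blast
  have memBp: "x \<in> fst Bp \<longleftrightarrow> x \<in> R \<and> (\<exists>b\<in>B. x \<le> b)" for x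
    unfolding Bp_def fst_cut_plus by blast
  have memCp: "x \<in> fst (cut_plus R {r}) \<longleftrightarrow> x \<in> R \<and> x \<le> r" for x r
    unfolding fst_cut_plus by blast
  have aboveB: "x \<notin> Y \<and> 0 < x" if "x \<in> R" "x \<notin> fst Bp" for x
  proof -
    have "\<not> x \<le> 0" using that B0 memBp by blast
    moreover have "x \<notin> Y" using that memBp unfolding Y_def B_def by auto
    ultimately show ?thesis by simp
  qed
  have notY_above: "r \<notin> fst Bp" if "r \<notin> Y" "0 < r" for r
  proof
    assume "r \<in> fst Bp"
    then obtain b' where "b' \<in> B" "r \<le> b'" using memBp by blast
    then have "\<bar>b'\<bar> < \<bar>r\<bar>" using vup_lt[OF vY] BY that(1) by blast
    then show False using \<open>r \<le> b'\<close> that(2) by linarith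
  qed
  have Bp_lt: "cut_less Bp (cut_plus R {r})" if "r \<in> R" "r \<notin> Y" "0 < r" for r
    using cut_witness[OF Bpc cut_plus_cuts, of r] memCp notY_above that by blast
  have aY: "a \<notin> Y" using noeq[OF a] ac unfolding Y_def by blast
  have step1: "\<not> ins Y (f Bp)"
  proof
    assume i: "ins Y (f Bp)"
    then have "f Bp \<in> V1 Y" unfolding V1_def using fc[OF Bpc] by blast
    then obtain W where W: "interval_basic R W" "Bp \<in> W" "W \<subseteq> {C\<in>cuts R. f C \<in> V1 Y}"
      using pre_open[OF full_V1[OF vY] Bpc] by blast
    have "\<exists>r. r \<in> R \<and> r \<notin> Y \<and> 0 < r \<and> cut_plus R {r} \<in> W"
    proof -
      have up: "\<exists>r. r \<in> R \<and> r \<notin> Y \<and> 0 < r \<and> cut_less Bp (cut_plus R {r}) \<and> cut_less (cut_plus R {r}) C2"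
        if C2: "C2 \<in> cuts R" "cut_less Bp C2" for C2
      proof -
        obtain d where d: "d \<in> fst C2" "d \<notin> fst Bp" using C2(2) unfolding cut_less_def by blast
        have dR: "d \<in> R" using d cuts_fst_sub[OF C2(1)] by blast
        have dd: "d \<notin> Y" "0 < d" using aboveB[OF dR d(2)] by auto
        define r where "r = d / 2"
        have r: "r \<in> R" "r \<notin> Y" "0 < r" unfolding r_def using sf(8)[OF dR] vup_half[OF vY dd(1)] dd(2) by auto
        have "cut_less (cut_plus R {r}) C2"
          using cut_witness[OF cut_plus_cuts C2(1) d(1)] memCp dd(2) unfolding r_def by auto
        then show ?thesis using r Bp_lt by blast
      qed
      have aR1: "\<bar>a\<bar> \<in> R" using sf(9)[OF a(1)] .
      have aR2: "\<bar>a\<bar> \<notin> Y"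
      proof
        assume "\<bar>a\<bar> \<in> Y"
        then have "a \<in> Y" using vup_convex[OF vY, of "\<bar>a\<bar>" a] by simp
        then show False using aY by blast
      qed
      have aR3: "0 < \<bar>a\<bar>" using a(2) by simp
      note aR = aR1 aR2 aR3
      from W(1) show ?thesis unfolding interval_basic_def
      proof (elim disjE bexE)
        fix C1 C2 assume C: "C1 \<in> cuts R" "C2 \<in> cuts R"
          and Weq: "W = {C \<in> cuts R. cut_less C1 C \<and> cut_less C C2}"
        then have l: "cut_less C1 Bp" "cut_less Bp C2" using W(2) by auto
        obtain r where r: "r \<in> R" "r \<notin> Y" "0 < r" "cut_less Bp (cut_plus R {r})" "cut_less (cut_plus R {r}) C2"
          using up[OF C(2) l(2)] by blast
        have "cut_less C1 (cut_plus R {r})" using cut_less_trans[OF l(1) r(4)] .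
        then have "cut_plus R {r} \<in> W" unfolding Weq using cut_plus_cuts[of R "{r}"] r(5) by simp
        then show ?thesis using r(1-3) by blast
      next
        fix C1 assume C: "C1 \<in> cuts R"
          and Weq: "W = {C \<in> cuts R. cut_less C1 C \<and> (cut_less C (R, {}) \<or> C = (R, {}))}"
        then have l: "cut_less C1 Bp" using W(2) by auto
        have "cut_less C1 (cut_plus R {\<bar>a\<bar>})" using l Bp_lt[OF aR] cut_less_trans by blast
        then have "cut_plus R {\<bar>a\<bar>} \<in> W" unfolding Weq using cut_plus_cuts[of R "{\<bar>a\<bar>}"] top_ge[OF cut_plus_cuts[of R "{\<bar>a\<bar>}"]] by simp
        then show ?thesis using aR by blast
      next
        fix C2 assume C: "C2 \<in> cuts R"
          and Weq: "W = {C \<in> cuts R. (cut_less ({}, R) C \<or> C = ({}, R)) \<and> cut_less C C2}"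
        then have l: "cut_less Bp C2" using W(2) by auto
        obtain r where r: "r \<in> R" "r \<notin> Y" "0 < r" "cut_less Bp (cut_plus R {r})" "cut_less (cut_plus R {r}) C2"
          using up[OF C(1) l] by blast
        have "cut_plus R {r} \<in> W" unfolding Weq using cut_plus_cuts[of R "{r}"] r(5) bot_le[OF cut_plus_cuts[of R "{r}"]] by simp
        then show ?thesis using r(1-3) by blast
      qed
    qed
    then obtain r where r: "r \<in> R" "r \<notin> Y" "0 < r" "cut_plus R {r} \<in> W" by blast
    have Cr: "cut_plus R {r} \<in> cuts R" by (rule cut_plus_cuts)
    have "ins Y (f (cut_plus R {r}))" using W(3) r(4) unfolding V1_def by blast
    then have "fst (f (cut_plus R {r})) \<subseteq> fst (pp Y)" unfolding ins_def cut_less_def by blast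
    moreover have "r \<in> fst (f (cut_plus R {r}))" using compm[OF Cr r(1)] memCp r(1) by blast
    ultimately have "r \<in> fst (pp Y)" by blast
    then obtain y where "y \<in> Y" "r \<le> y" unfolding mem_pp by blast
    then show False using vup_lt[OF vY \<open>y \<in> Y\<close> r(2)] r(3) by linarith
  qed
  have fBpc: "f Bp \<in> cuts UNIV" using fc[OF Bpc] .
  have "0 \<in> fst (f Bp)" using compm[OF Bpc sf(1)] memBp B0 sf(1) by blast
  moreover have "0 \<notin> fst (mm Y)" using vup0[OF vY] by (auto simp: mem_mm)
  ultimately have "cut_less (mm Y) (f Bp)" by (rule wit[OF mmc fBpc])
  then have "\<not> cut_less (f Bp) (pp Y)" using step1 unfolding ins_def by blast
  then have sub1: "fst (pp Y) \<subseteq> fst (f Bp)" using not_cut_less[OF fBpc ppc] by blast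
  have cY: "\<bar>c\<bar> \<in> Y" using vup_abs[OF vY] vle_refl unfolding Y_def by blast
  have cY2: "\<bar>c\<bar> \<notin> Y2" unfolding Y2_def using vle_abs_le[of c "\<bar>c\<bar>"] by auto
  have "\<bar>c\<bar> \<in> fst (pp Y)" unfolding mem_pp using cY by blast
  then have "\<bar>c\<bar> \<in> fst (f Bp)" using sub1 by blast
  moreover have "\<bar>c\<bar> \<notin> fst (pp Y2)"
    using vup_lt[OF vY2 _ cY2] by (force simp: mem_pp)
  ultimately have "cut_less (pp Y2) (f Bp)" by (rule wit[OF ppc fBpc])
  then have "f Bp \<in> V2 Y2" unfolding V2_def outs_def using fBpc by blast
  then obtain W where W: "interval_basic R W" "Bp \<in> W" "W \<subseteq> {C\<in>cuts R. f C \<in> V2 Y2}"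
    using pre_open[OF full_V2[OF vY2] Bpc] by blast
  have bB: "\<bar>b\<bar> \<in> B" "0 < \<bar>b\<bar>" using sf(9)[OF b(1)] b(2) cb vle_trans[OF cb vle_abs_le[of "\<bar>b\<bar>" b]]
    unfolding B_def by auto
  have sB: "s \<in> R" if "s \<in> B" for s using that B_def by blast
  have Cs_lt: "cut_less (cut_plus R {s}) Bp" if "s \<in> B" "0 < s" for s
  proof -
    have "2 * s \<in> B" using that(1) sf(7) vle_trans[OF _ vle_double] unfolding B_def by blast
    then have "2 * s \<in> fst Bp" using memBp sB by blast
    moreover have "2 * s \<notin> fst (cut_plus R {s})" using memCp that(2) by auto
    ultimately show ?thesis by (rule cut_witness[OF cut_plus_cuts Bpc])
  qed
  have "\<exists>s. s \<in> B \<and> 0 < s \<and> cut_plus R {s} \<in> W"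
  proof -
    have dn: "\<exists>s. s \<in> B \<and> 0 < s \<and> cut_less C1 (cut_plus R {s})"
      if C1: "C1 \<in> cuts R" "cut_less C1 Bp" for C1
    proof -
      obtain d where d: "d \<in> fst Bp" "d \<notin> fst C1" using C1(2) unfolding cut_less_def by blast
      then obtain b0 where b0: "b0 \<in> B" "d \<le> b0" "d \<in> R" using memBp by blast
      have ab0: "\<bar>b0\<bar> \<in> B" using b0(1) sf(9) vle_trans[OF _ vle_abs_le[of "\<bar>b0\<bar>" b0]]
        unfolding B_def by auto
      define s where "s = max \<bar>b0\<bar> \<bar>b\<bar>"
      have s: "s \<in> B" "0 < s" "d \<le> s" using ab0 bB b0(2) unfolding s_def by (auto simp: max_def)
      have "s \<notin> fst C1"
      proof
        assume "s \<in> fst C1"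
        then have "d \<in> fst C1" using cuts_down[OF C1(1) _ b0(3) s(3)] by blast
        then show False using d by blast
      qed
      moreover have "s \<in> fst (cut_plus R {s})" using memCp sB[OF s(1)] by blast
      ultimately have "cut_less C1 (cut_plus R {s})" using cut_witness[OF C1(1) cut_plus_cuts] by blast
      then show ?thesis using s by blast
    qed
    from W(1) show ?thesis unfolding interval_basic_def
    proof (elim disjE bexE)
      fix C1 C2 assume C: "C1 \<in> cuts R" "C2 \<in> cuts R"
        and Weq: "W = {C \<in> cuts R. cut_less C1 C \<and> cut_less C C2}"
      then have l: "cut_less C1 Bp" "cut_less Bp C2" using W(2) by auto
      obtain s where s: "s \<in> B" "0 < s" "cut_less C1 (cut_plus R {s})" using dn[OF C(1) l(1)] by blast
      have "cut_less (cut_plus R {s}) C2" using cut_less_trans[OF Cs_lt[OF s(1,2)] l(2)] .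
      then have "cut_plus R {s} \<in> W" unfolding Weq using cut_plus_cuts[of R "{s}"] s(3) by simp
      then show ?thesis using s(1,2) by blast
    next
      fix C1 assume C: "C1 \<in> cuts R"
        and Weq: "W = {C \<in> cuts R. cut_less C1 C \<and> (cut_less C (R, {}) \<or> C = (R, {}))}"
      then have l: "cut_less C1 Bp" using W(2) by auto
      obtain s where s: "s \<in> B" "0 < s" "cut_less C1 (cut_plus R {s})" using dn[OF C l] by blast
      have "cut_plus R {s} \<in> W" unfolding Weq using cut_plus_cuts[of R "{s}"] s(3) top_ge[OF cut_plus_cuts[of R "{s}"]] by simp
      then show ?thesis using s(1,2) by blast
    next
      fix C2 assume C: "C2 \<in> cuts R"
        and Weq: "W = {C \<in> cuts R. (cut_less ({}, R) C \<or> C = ({}, R)) \<and> cut_less C C2}"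
      then have l: "cut_less Bp C2" using W(2) by auto
      have "cut_less (cut_plus R {\<bar>b\<bar>}) C2" using Cs_lt[OF bB] l cut_less_trans by blast
      then have "cut_plus R {\<bar>b\<bar>} \<in> W" unfolding Weq using cut_plus_cuts[of R "{\<bar>b\<bar>}"] bot_le[OF cut_plus_cuts[of R "{\<bar>b\<bar>}"]] by simp
      then show ?thesis using bB by blast
    qed
  qed
  then obtain s where s: "s \<in> B" "0 < s" "cut_plus R {s} \<in> W" by blast
  have Cs: "cut_plus R {s} \<in> cuts R" by (rule cut_plus_cuts)
  have sR: "s \<in> R" using sB[OF s(1)] .
  have sY2: "s \<in> Y2" using s(1) noeq[OF sR] s(2) unfolding B_def Y2_def by auto
  have s2Y2: "2 * s \<in> Y2" using vupD[OF vY2 sY2 vle_double] .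
  have o: "outs Y2 (f (cut_plus R {s}))" using W(3) s(3) unfolding V2_def by blast
  have sin: "s \<in> fst (f (cut_plus R {s}))" using compm[OF Cs sR] memCp sR by blast
  have s2n: "2 * s \<notin> fst (f (cut_plus R {s}))" using compm[OF Cs sf(7)[OF sR]] memCp s(2) by auto
  show False
    using o unfolding outs_def cut_less_def
  proof (elim disjE)
    assume "fst (f (cut_plus R {s})) \<subset> fst (mm Y2)"
    then have "s \<in> fst (mm Y2)" using sin by blast
    then show False using sY2 by (auto simp: mem_mm)
  next
    assume "fst (pp Y2) \<subset> fst (f (cut_plus R {s}))"
    moreover have "2 * s \<in> fst (pp Y2)" using s2Y2 by (auto simp: mem_pp)
    ultimately show False using s2n by blast
  qed
qed


end
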